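(* Let $0<\alpha<1$ and $p,q>0$. If $R_{\alpha,p}(A,B)\le_\lambda\mathcal{A}_{\alpha,q}(A,B)$ holds for all positive definite $2\times2$ matrices $A,B$, then $\alpha(1-\alpha)p\le q$.
   Context: For positive definite $A,B$: $R_{\alpha,p}(A,B):=\bigl(A^{\frac{1-\alpha}{2}p}B^{\alpha p}A^{\frac{1-\alpha}{2}p}\bigr)^{1/p}$ and $\mathcal{A}_{\alpha,q}(A,B):=((1-\alpha)A^q+\alpha B^q)^{1/q}$. For positive semidefinite $n\times n$ matrices $X,Y$ with eigenvalues $\lambda_1(X)\ge\dots\ge\lambda_n(X)$ (with multiplicities), $X\le_\lambda Y$ means $\lambda_i(X)\le\lambda_i(Y)$ for each $i=1,\dots,n$. *)

theory Defs
  imports "HOL-Analysis.Analysis" "HOL-Library.Numeral_Type"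
begin

definition adjoint :: "complex^'n^'m \<Rightarrow> complex^'m^'n" where
  "adjoint A = (\<chi> i j. cnj (A $ j $ i))"

definition hermitian :: "complex^'n^'n \<Rightarrow> bool" where
  "hermitian A \<longleftrightarrow> adjoint A = A"

definition unitary :: "complex^'n^'n \<Rightarrow> bool" where
  "unitary U \<longleftrightarrow> adjoint U ** U = mat 1"

definition pos_def :: "complex^'n^'n \<Rightarrow> bool" where
  "pos_def A \<longleftrightarrow> hermitian A \<and>
     (\<forall>x::complex^'n. x \<noteq> 0 \<longrightarrow> 0 < Re (\<Sum>i\<in>UNIV. cnj (x $ i) * (A *v x) $ i))"

definition diagc :: "('n \<Rightarrow> real) \<Rightarrow> complex^'n^'n" where
  "diagc d = (\<chi> i j. if i = j then complex_of_real (d i) else 0)"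

text \<open>Real power A^t of a positive definite matrix via its spectral decomposition
  A = U diag(d) U^*, A^t = U diag(d^t) U^* (well defined, independent of the decomposition).\<close>
definition mat_rpow :: "complex^'n^'n \<Rightarrow> real \<Rightarrow> complex^'n^'n" where
  "mat_rpow A t = (SOME B. \<exists>U d. unitary U \<and> (\<forall>i. 0 < d i) \<and>
       A = U ** diagc d ** adjoint U \<and> B = U ** diagc (\<lambda>i. d i powr t) ** adjoint U)"

definition eigs :: "complex^('n::{finite,linorder})^('n::{finite,linorder}) \<Rightarrow> ('n::{finite,linorder} \<Rightarrow> real)" where
  "eigs X = (SOME d. (\<forall>i j. i \<le> j \<longrightarrow> d j \<le> d i) \<and>
       (\<exists>U. unitary U \<and> X = U ** diagc d ** adjoint U))"

definition le_lambda :: "complex^('n::{finite,linorder})^('n::{finite,linorder}) \<Rightarrow> complex^('n::{finite,linorder})^('n::{finite,linorder}) \<Rightarrow> bool" where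
  "le_lambda X Y \<longleftrightarrow> (\<forall>i::'n. eigs X i \<le> eigs Y i)"

definition R_mean :: "real \<Rightarrow> real \<Rightarrow> complex^'n^'n \<Rightarrow> complex^'n^'n \<Rightarrow> complex^'n^'n" where
  "R_mean \<alpha> p A B = mat_rpow
     (mat_rpow A ((1 - \<alpha>) / 2 * p) ** mat_rpow B (\<alpha> * p) ** mat_rpow A ((1 - \<alpha>) / 2 * p)) (1 / p)"

definition A_mean :: "real \<Rightarrow> real \<Rightarrow> complex^'n^'n \<Rightarrow> complex^'n^'n \<Rightarrow> complex^'n^'n" where
  "A_mean \<alpha> q A B = mat_rpow ((1 - \<alpha>) *\<^sub>R mat_rpow A q + \<alpha> *\<^sub>R mat_rpow B q) (1 / q)"

end

theory Submission
  imports Defs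
begin
lemma two_eq0: "(2::2) = 0" by simp
lemma two_cases: "(x::2) = 0 \<or> x = 1"
  using exhaust_2[of x] two_eq0 by metis
lemma zero_less_one2: "(0::2) < 1" by (simp add: less_bit0_def bit0.Rep_0 bit0.Rep_1)
lemma zero_neq_one2[simp]: "(0::2) \<noteq> 1" "(1::2) \<noteq> 0" by simp_all
lemma UNIV2: "(UNIV::2 set) = {0,1}" using two_cases by auto
lemma sum2: "sum f (UNIV::2 set) = f 0 + f 1" by (simp add: UNIV2)

definition mk2 :: "complex \<Rightarrow> complex \<Rightarrow> complex \<Rightarrow> complex \<Rightarrow> complex^2^2" where
 "mk2 a b c d = (\<chi> i j. if i = 0 then (if j = 0 then a else b) else (if j = 0 then c else d))"

lemma mk2_nth[simp]: "mk2 a b c d $ 0 $ 0 = a" "mk2 a b c d $ 0 $ 1 = b"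
  "mk2 a b c d $ 1 $ 0 = c" "mk2 a b c d $ 1 $ 1 = d"
  by (simp_all add: mk2_def)

lemma mk2_eta: "M = mk2 (M$0$0) (M$0$1) (M$1$0) (M$1$1)"
  apply (simp add: vec_eq_iff mk2_def, intro allI)
  subgoal for i j using two_cases[of i] two_cases[of j] by auto
  done

lemma mk2_eq[simp]: "mk2 a b c d = mk2 a' b' c' d' \<longleftrightarrow> a = a' \<and> b = b' \<and> c = c' \<and> d = d'"
  apply (rule iffI)
   apply (drule arg_cong[where f="\<lambda>M. (M$0$0, M$0$1, M$1$0, M$1$1)"])
  by simp_all

lemma mk2_mult[simp]: "mk2 a b c d ** mk2 e f g h = mk2 (a*e+b*g) (a*f+b*h) (c*e+d*g) (c*f+d*h)"
  by (subst mk2_eta) (simp add: matrix_matrix_mult_def sum2)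

lemma adjoint_mk2[simp]: "adjoint (mk2 a b c d) = mk2 (cnj a) (cnj c) (cnj b) (cnj d)"
  by (subst mk2_eta) (simp add: adjoint_def)

lemma diagc_mk2: "diagc d = mk2 (d 0) 0 0 (d 1)"
  by (subst mk2_eta) (simp add: diagc_def)

lemma mat1_mk2: "(mat 1 :: complex^2^2) = mk2 1 0 0 1"
  by (subst mk2_eta) (simp add: mat_def)

lemma add_mk2[simp]: "mk2 a b c d + mk2 a' b' c' d' = mk2 (a+a') (b+b') (c+c') (d+d')"
  by (subst mk2_eta) simp

lemma scaleR_mk2[simp]: "r *\<^sub>R mk2 a b c d = mk2 (r*a) (r*b) (r*c) (r*d)"
  by (subst mk2_eta) (simp add: vector_scaleR_component, simp add: scaleR_conv_of_real)

lemma mulv_mk2[simp]: "(mk2 a b c d *v x) $ 0 = a * x$0 + b * x$1"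
   "(mk2 a b c d *v x) $ 1 = c * x$0 + d * x$1"
  by (simp_all add: matrix_vector_mult_def sum2)

lemma unitary_mk2: "unitary (mk2 a b c d) \<longleftrightarrow>
   cnj a * a + cnj c * c = 1 \<and> cnj a * b + cnj c * d = 0 \<and> cnj b * a + cnj d * c = 0 \<and> cnj b * b + cnj d * d = 1"
  by (simp add: unitary_def mat1_mk2)

lemma unitary_right: assumes "unitary U" shows "U ** adjoint U = mat 1"
  using assms matrix_left_right_inverse unfolding unitary_def by blast

lemma unitary_mk2': assumes "unitary (mk2 a b c d)" shows
   "a * cnj a + b * cnj b = 1" "a * cnj c + b * cnj d = 0" "c * cnj a + d * cnj b = 0" "c * cnj c + d * cnj d = 1"
  using unitary_right[OF assms] by (simp_all add: mat1_mk2)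

definition tr2 :: "complex^2^2 \<Rightarrow> complex" where "tr2 M = M$0$0 + M$1$1"
definition dt2 :: "complex^2^2 \<Rightarrow> complex" where "dt2 M = M$0$0 * M$1$1 - M$0$1 * M$1$0"

lemma dt2_mult: "dt2 (M ** N) = dt2 M * dt2 N"
  apply (subst (1 2) mk2_eta[of M], subst (1 2) mk2_eta[of N])
  apply (simp add: dt2_def)
  by algebra

lemma dt2_adj: "dt2 (adjoint M) = cnj (dt2 M)"
  by (subst (1 2) mk2_eta[of M]) (simp add: dt2_def)

lemma decomp_tr_dt:
  assumes U: "unitary U" and X: "X = U ** diagc d ** adjoint U"
  shows "tr2 X = complex_of_real (d 0 + d 1)" "dt2 X = complex_of_real (d 0 * d 1)"
proof -
  obtain a b c e where Ue: "U = mk2 a b c e" by (metis mk2_eta)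
  have u: "cnj a * a + cnj c * c = 1" "cnj b * b + cnj e * e = 1"
    using U unfolding Ue unitary_mk2 by auto
  have "tr2 X = d 0 * (cnj a * a + cnj c * c) + d 1 * (cnj b * b + cnj e * e)"
    unfolding X Ue tr2_def diagc_mk2 by simp algebra
  thus "tr2 X = complex_of_real (d 0 + d 1)" using u by simp
  have "dt2 (adjoint U ** U) = 1" using U unfolding unitary_def by (simp add: mat1_mk2 dt2_def)
  hence h: "cnj (dt2 U) * dt2 U = 1" by (simp add: dt2_mult dt2_adj)
  have "dt2 X = dt2 U * (d 0 * d 1) * cnj (dt2 U)"
  proof -
    have "dt2 (diagc d) = d 0 * d 1" by (simp add: diagc_mk2 dt2_def)
    thus ?thesis unfolding X dt2_mult dt2_adj by simp
  qed
  also have "\<dots> = d 0 * d 1 * (cnj (dt2 U) * dt2 U)" by (simp only: mult_ac)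
  also have "\<dots> = d 0 * d 1" using h by simp
  finally show "dt2 X = complex_of_real (d 0 * d 1)" by simp
qed

lemma sorted2: "(\<forall>i j::2. i \<le> j \<longrightarrow> e j \<le> e i) \<longleftrightarrow> e 1 \<le> (e 0::real)"
proof
  assume "\<forall>i j::2. i \<le> j \<longrightarrow> e j \<le> e i" thus "e 1 \<le> e 0" using zero_less_one2 by (meson less_imp_le)
next
  assume h: "e 1 \<le> e 0"
  show "\<forall>i j::2. i \<le> j \<longrightarrow> e j \<le> e i"
  proof (intro allI impI)
    fix i j :: 2 assume ij: "i \<le> j"
    have "\<not> (1::2) \<le> 0" using zero_less_one2 by (simp add: not_le)
    then show "e j \<le> e i" using two_cases[of i] two_cases[of j] h ij
      by (elim disjE) simp_all
  qed
qed

lemma two_roots: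
  fixes x y u v :: real
  assumes "x + y = u + v" "x * y = u * v" "y \<le> x" "v \<le> u"
  shows "x = u \<and> y = v"
proof -
  have "(x - u) * (x - v) = x * x - (u + v) * x + u * v" by (simp add: algebra_simps)
  also have "\<dots> = x * x - (x + y) * x + x * y" using assms(1,2) by simp
  also have "\<dots> = 0" by (simp add: algebra_simps)
  finally have "x = u \<or> x = v" by simp
  thus ?thesis using assms by (elim disjE) linarith+
qed

lemma eigs_char:
  fixes X :: "complex^2^2"
  assumes U: "unitary U" and s: "d 1 \<le> d 0" and X: "X = U ** diagc d ** adjoint U"
  shows "eigs X = d"
proof -
  let ?P = "\<lambda>e. (\<forall>i j::2. i \<le> j \<longrightarrow> e j \<le> e i) \<and> (\<exists>U. unitary U \<and> X = U ** diagc e ** adjoint U)"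
  have "?P d" using U X s unfolding sorted2 by blast
  hence "?P (eigs X)" unfolding eigs_def by (rule someI[of ?P])
  hence s2: "eigs X 1 \<le> eigs X 0" and "\<exists>V. unitary V \<and> X = V ** diagc (eigs X) ** adjoint V"
    unfolding sorted2 by simp_all
  then obtain V where V: "unitary V" "X = V ** diagc (eigs X) ** adjoint V" by blast
  have "complex_of_real (eigs X 0 + eigs X 1) = complex_of_real (d 0 + d 1)"
    using decomp_tr_dt(1)[OF V] decomp_tr_dt(1)[OF U X] by simp
  hence e1: "eigs X 0 + eigs X 1 = d 0 + d 1" by (simp only: of_real_eq_iff)
  have "complex_of_real (eigs X 0 * eigs X 1) = complex_of_real (d 0 * d 1)"
    using decomp_tr_dt(2)[OF V] decomp_tr_dt(2)[OF U X] by simp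
  hence e2: "eigs X 0 * eigs X 1 = d 0 * d 1" by (simp only: of_real_eq_iff)
  have h: "eigs X 0 = d 0 \<and> eigs X 1 = d 1" by (rule two_roots[OF e1 e2 s2 s])
  show ?thesis
  proof
    fix i :: 2 show "eigs X i = d i" using two_cases[of i] h by (elim disjE) simp_all
  qed
qed

lemma affine_diag:
  fixes U :: "complex^2^2"
  assumes U: "unitary U"
  shows "U ** diagc (\<lambda>i. \<beta> * d i + \<gamma>) ** adjoint U = \<beta> *\<^sub>R (U ** diagc d ** adjoint U) + \<gamma> *\<^sub>R mat 1"
proof -
  have "U ** diagc (\<lambda>i. \<beta> * d i + \<gamma>) ** adjoint U = \<beta> *\<^sub>R (U ** diagc d ** adjoint U) + \<gamma> *\<^sub>R (U ** adjoint U)"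
    apply (subst (1 2 3 4 5 6) mk2_eta[of U])
    apply (simp add: diagc_mk2)
    by algebra
  thus ?thesis using unitary_right[OF U] by simp
qed

definition Lag :: "real \<Rightarrow> real \<Rightarrow> real \<Rightarrow> complex^2^2 \<Rightarrow> complex^2^2" where
"Lag t x y M = (if x = y then 0 *\<^sub>R M + (x powr t) *\<^sub>R mat 1
   else ((x powr t - y powr t) / (x - y)) *\<^sub>R M + ((x * y powr t - y * x powr t) / (x - y)) *\<^sub>R mat 1)"

lemma Lag_sym: "Lag t x y M = Lag t y x M"
proof (cases "x = y")
  case False
  hence "(x powr t - y powr t) / (x - y) = (y powr t - x powr t) / (y - x)"
        "(x * y powr t - y * x powr t) / (x - y) = (y * x powr t - x * y powr t) / (y - x)"
    by (simp_all add: field_simps)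
  thus ?thesis unfolding Lag_def using False by simp
qed (simp add: Lag_def)

lemma Lag_diag:
  assumes U: "unitary U"
  shows "U ** diagc (\<lambda>i. d i powr t) ** adjoint U = Lag t (d 0) (d 1) (U ** diagc d ** adjoint U)"
proof (cases "d 0 = d 1")
  case True
  have "(\<lambda>i. d i powr t) = (\<lambda>i. 0 * d i + d 0 powr t)"
  proof
    fix i :: 2 show "d i powr t = 0 * d i + d 0 powr t" using two_cases[of i] True by (elim disjE) simp_all
  qed
  hence "U ** diagc (\<lambda>i. d i powr t) ** adjoint U = U ** diagc (\<lambda>i. 0 * d i + d 0 powr t) ** adjoint U"
    by simp
  also have "\<dots> = 0 *\<^sub>R (U ** diagc d ** adjoint U) + d 0 powr t *\<^sub>R mat 1"
    by (rule affine_diag[OF U])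
  finally show ?thesis using True unfolding Lag_def by simp
next
  case False
  let ?b = "(d 0 powr t - d 1 powr t) / (d 0 - d 1)"
  let ?c = "(d 0 * d 1 powr t - d 1 * d 0 powr t) / (d 0 - d 1)"
  have "(\<lambda>i. d i powr t) = (\<lambda>i. ?b * d i + ?c)"
  proof
    fix i :: 2
    have "d 0 - d 1 \<noteq> 0" using False by simp
    have n0: "(d 0 powr t - d 1 powr t) * d 0 + (d 0 * d 1 powr t - d 1 * d 0 powr t) = d 0 powr t * (d 0 - d 1)"
      by (simp add: algebra_simps)
    have n1: "(d 0 powr t - d 1 powr t) * d 1 + (d 0 * d 1 powr t - d 1 * d 0 powr t) = d 1 powr t * (d 0 - d 1)"
      by (simp add: algebra_simps)
    have "?b * d 0 + ?c = ((d 0 powr t - d 1 powr t) * d 0 + (d 0 * d 1 powr t - d 1 * d 0 powr t)) / (d 0 - d 1)"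
      by (simp add: add_divide_distrib)
    also have "\<dots> = d 0 powr t" using \<open>d 0 - d 1 \<noteq> 0\<close> by (simp only: n0) simp
    finally have h0: "d 0 powr t = ?b * d 0 + ?c" by simp
    have "?b * d 1 + ?c = ((d 0 powr t - d 1 powr t) * d 1 + (d 0 * d 1 powr t - d 1 * d 0 powr t)) / (d 0 - d 1)"
      by (simp add: add_divide_distrib)
    also have "\<dots> = d 1 powr t" using \<open>d 0 - d 1 \<noteq> 0\<close> by (simp only: n1) simp
    finally have h1: "d 1 powr t = ?b * d 1 + ?c" by simp
    note h = h0 h1
    show "d i powr t = ?b * d i + ?c" using two_cases[of i] h by (elim disjE) simp_all
  qed
  hence "U ** diagc (\<lambda>i. d i powr t) ** adjoint U = U ** diagc (\<lambda>i. ?b * d i + ?c) ** adjoint U"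
    by simp
  also have "\<dots> = ?b *\<^sub>R (U ** diagc d ** adjoint U) + ?c *\<^sub>R mat 1"
    by (rule affine_diag[OF U])
  finally show ?thesis using False unfolding Lag_def by simp
qed

lemma rpow_unique:
  fixes A :: "complex^2^2"
  assumes U: "unitary U" and d: "\<forall>i. 0 < d i" and A: "A = U ** diagc d ** adjoint U"
  shows "mat_rpow A t = U ** diagc (\<lambda>i. d i powr t) ** adjoint U"
proof -
  let ?P = "\<lambda>B. \<exists>U d. unitary U \<and> (\<forall>i. 0 < d i) \<and>
       A = U ** diagc d ** adjoint U \<and> B = U ** diagc (\<lambda>i. d i powr t) ** adjoint U"
  have "?P (U ** diagc (\<lambda>i. d i powr t) ** adjoint U)" using U d A by blast
  hence "?P (mat_rpow A t)" unfolding mat_rpow_def by (rule someI[of ?P])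
  then obtain V e where V: "unitary V" and A2: "A = V ** diagc e ** adjoint V"
     and B: "mat_rpow A t = V ** diagc (\<lambda>i. e i powr t) ** adjoint V" by blast
  have "complex_of_real (e 0 + e 1) = complex_of_real (d 0 + d 1)"
    using decomp_tr_dt(1)[OF V A2] decomp_tr_dt(1)[OF U A] by simp
  hence e1: "e 0 + e 1 = d 0 + d 1" by (simp only: of_real_eq_iff)
  have "complex_of_real (e 0 * e 1) = complex_of_real (d 0 * d 1)"
    using decomp_tr_dt(2)[OF V A2] decomp_tr_dt(2)[OF U A] by simp
  hence e2: "e 0 * e 1 = d 0 * d 1" by (simp only: of_real_eq_iff)
  have "(e 0 - d 0) * (e 0 - d 1) = e 0 * e 0 - (d 0 + d 1) * e 0 + d 0 * d 1" by (simp add: algebra_simps)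
  also have "\<dots> = e 0 * e 0 - (e 0 + e 1) * e 0 + e 0 * e 1" using e1 e2 by simp
  also have "\<dots> = 0" by (simp add: algebra_simps)
  finally have "e 0 = d 0 \<or> e 0 = d 1" by simp
  hence "Lag t (e 0) (e 1) A = Lag t (d 0) (d 1) A"
  proof
    assume "e 0 = d 0" hence "e 1 = d 1" using e1 by simp
    thus ?thesis using \<open>e 0 = d 0\<close> by simp
  next
    assume "e 0 = d 1" hence "e 1 = d 0" using e1 by simp
    thus ?thesis using \<open>e 0 = d 1\<close> Lag_sym by simp
  qed
  thus ?thesis using B Lag_diag[OF V, of e t] Lag_diag[OF U, of d t] A A2 by simp
qed

lemma pos_def_decomp:
  fixes U :: "complex^2^2"
  assumes U: "unitary U" and d: "\<forall>i. 0 < d i"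
  shows "pos_def (U ** diagc d ** adjoint U)"
proof -
  obtain a b c e where Ue: "U = mk2 a b c e" by (metis mk2_eta)
  have uu: "a * cnj a + b * cnj b = 1" "a * cnj c + b * cnj e = 0" "c * cnj a + e * cnj b = 0" "c * cnj c + e * cnj e = 1"
    using unitary_mk2'[of a b c e] U Ue by simp_all
  have herm: "hermitian (U ** diagc d ** adjoint U)"
    unfolding hermitian_def Ue diagc_mk2 by (simp add: mult_ac)
  have "0 < Re (\<Sum>i\<in>UNIV. cnj (x $ i) * ((U ** diagc d ** adjoint U) *v x) $ i)" if x: "x \<noteq> 0" for x :: "complex^2"
  proof -
    define y0 where "y0 = cnj a * x$0 + cnj c * x$1"
    define y1 where "y1 = cnj b * x$0 + cnj e * x$1"
    have q: "(\<Sum>i\<in>UNIV. cnj (x $ i) * ((U ** diagc d ** adjoint U) *v x) $ i)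
       = d 0 * (y0 * cnj y0) + d 1 * (y1 * cnj y1)"
      unfolding Ue diagc_mk2 y0_def y1_def by (simp add: sum2) algebra
    have "y0 \<noteq> 0 \<or> y1 \<noteq> 0"
    proof (rule ccontr)
      assume "\<not> (y0 \<noteq> 0 \<or> y1 \<noteq> 0)"
      hence z: "y0 = 0" "y1 = 0" by auto
      have "x$0 = a * y0 + b * y1" "x$1 = c * y0 + e * y1"
        unfolding y0_def y1_def using uu by algebra+
      hence "x$0 = 0" "x$1 = 0" using z by simp_all
      hence "x = 0"
      unfolding vec_eq_iff proof (intro allI)
        fix i :: 2 assume "x$0 = 0" "x$1 = 0"
        thus "x$i = 0$i" using two_cases[of i] by (elim disjE) simp_all
      qed
      thus False using x by simp
    qed
    hence pos: "0 < (Re y0)\<^sup>2 + (Im y0)\<^sup>2 \<or> 0 < (Re y1)\<^sup>2 + (Im y1)\<^sup>2"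
      by (simp only: complex_neq_0)
    have "Re (d 0 * (y0 * cnj y0) + d 1 * (y1 * cnj y1)) = d 0 * ((Re y0)\<^sup>2 + (Im y0)\<^sup>2) + d 1 * ((Re y1)\<^sup>2 + (Im y1)\<^sup>2)"
      by (simp add: complex_mult_cnj)
    moreover have "0 < d 0 * ((Re y0)\<^sup>2 + (Im y0)\<^sup>2) + d 1 * ((Re y1)\<^sup>2 + (Im y1)\<^sup>2)"
      using pos d by (metis add_nonneg_pos add_pos_nonneg less_eq_real_def mult_pos_pos sum_power2_ge_zero zero_le_mult_iff)
    ultimately show ?thesis using q by simp
  qed
  thus ?thesis using herm unfolding pos_def_def by blast
qed

lemma rot_exists:
  fixes x y z :: real
  shows "\<exists>c s l1 l2. c\<^sup>2 + s\<^sup>2 = 1 \<and> l2 \<le> l1 \<and> c\<^sup>2 * l1 + s\<^sup>2 * l2 = x \<and> c * s * (l1 - l2) = y \<and> s\<^sup>2 * l1 + c\<^sup>2 * l2 = z"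
proof (cases "y = 0")
  case True
  show ?thesis
  proof (cases "z \<le> x")
    case True
    thus ?thesis using \<open>y = 0\<close> by (intro exI[of _ 1] exI[of _ 0] exI[of _ x] exI[of _ z]) simp
  next
    case False
    thus ?thesis using \<open>y = 0\<close> by (intro exI[of _ 0] exI[of _ 1] exI[of _ z] exI[of _ x]) simp
  qed
next
  case False
  define r where "r = sqrt ((x - z)\<^sup>2 + 4 * y\<^sup>2)"
  define w where "w = (z - x + r) / 2"
  define n where "n = sqrt (y\<^sup>2 + w\<^sup>2)"
  define l1 where "l1 = (x + z + r) / 2"
  define l2 where "l2 = (x + z - r) / 2"
  have r0: "0 \<le> r" unfolding r_def by simp
  have r2: "r\<^sup>2 = (x - z)\<^sup>2 + 4 * y\<^sup>2" unfolding r_def by simp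
  have "4 * (w * (r - w)) = (z - x + r) * (r - (z - x))" unfolding w_def by (simp add: field_simps)
  also have "\<dots> = r\<^sup>2 - (z - x)\<^sup>2" by (simp add: power2_eq_square algebra_simps)
  also have "\<dots> = 4 * y\<^sup>2" unfolding r2 by (simp add: power2_eq_square algebra_simps)
  finally have wr: "w * (r - w) = y\<^sup>2" by simp
  have y2: "0 < y\<^sup>2" using False by simp
  have n2: "n\<^sup>2 = y\<^sup>2 + w\<^sup>2" unfolding n_def by simp
  have npos: "0 < n\<^sup>2" using n2 y2 by (simp add: add_pos_nonneg)
  hence nz: "n \<noteq> 0" by auto
  have l1x: "l1 - x = w" and l2x: "l2 - x = w - r" and l12: "l1 - l2 = r" unfolding l1_def l2_def w_def by (simp_all add: field_simps)
  define c where "c = y / n"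
  define s where "s = w / n"
  have "c\<^sup>2 + s\<^sup>2 = (y\<^sup>2 + w\<^sup>2) / n\<^sup>2" unfolding c_def s_def by (simp add: power_divide add_divide_distrib)
  hence cs: "c\<^sup>2 + s\<^sup>2 = 1" using n2 npos by (metis divide_self less_irrefl)
  have e1: "c\<^sup>2 * l1 + s\<^sup>2 * l2 = x"
  proof -
    have "y\<^sup>2 * (l1 - x) + w\<^sup>2 * (l2 - x) = w * (y\<^sup>2 - w * (r - w))" unfolding l1x l2x
      by (simp add: power2_eq_square algebra_simps)
    also have "\<dots> = 0" using wr by simp
    finally have "y\<^sup>2 * l1 + w\<^sup>2 * l2 = x * n\<^sup>2" unfolding n2 by (simp add: algebra_simps)
    hence "(y\<^sup>2 * l1 + w\<^sup>2 * l2) / n\<^sup>2 = x" using npos by simp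
    thus ?thesis unfolding c_def s_def by (simp add: power_divide add_divide_distrib times_divide_eq_left)
  qed
  have e2: "c * s * (l1 - l2) = y"
  proof -
    have "w * r = n\<^sup>2" unfolding n2 using wr by (simp add: power2_eq_square algebra_simps)
    hence "y * w * r / n\<^sup>2 = y * n\<^sup>2 / n\<^sup>2" by (simp add: mult.assoc)
    hence "y * w * r / n\<^sup>2 = y" using npos by simp
    thus ?thesis unfolding c_def s_def l12 by (simp add: power2_eq_square)
  qed
  have e3: "s\<^sup>2 * l1 + c\<^sup>2 * l2 = z"
  proof -
    have "(c\<^sup>2 + s\<^sup>2) * (l1 + l2) = x + z" unfolding cs l1_def l2_def by (simp add: field_simps)
    thus ?thesis using e1 by (simp add: algebra_simps)
  qed
  show ?thesis using cs e1 e2 e3 l12 r0 by (intro exI[of _ c] exI[of _ s] exI[of _ l1] exI[of _ l2]) simp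
qed

lemma spec_real:
  fixes x y z :: real
  shows "\<exists>U d. unitary U \<and> d 1 \<le> d 0 \<and> mk2 (of_real x) (of_real y) (of_real y) (of_real z) = U ** diagc d ** adjoint U"
proof -
  obtain c s l1 l2 where h: "c\<^sup>2 + s\<^sup>2 = 1" "l2 \<le> l1" "c\<^sup>2 * l1 + s\<^sup>2 * l2 = x" "c * s * (l1 - l2) = y" "s\<^sup>2 * l1 + c\<^sup>2 * l2 = z"
    using rot_exists[of x y z] by blast
  define U where "U = mk2 (of_real c) (- of_real s) (of_real s) (of_real c)"
  define d where "d = (\<lambda>i::2. if i = 0 then l1 else l2)"
  have hc: "complex_of_real c * complex_of_real c + complex_of_real s * complex_of_real s = 1"
  proof - have "c * c + s * s = 1" using h(1) by (simp add: power2_eq_square) 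
    hence "complex_of_real (c * c + s * s) = 1" by simp thus ?thesis by simp qed
  have "unitary U" unfolding U_def unitary_mk2 using hc by (simp add: algebra_simps)
  moreover have "d 1 \<le> d 0" unfolding d_def using h(2) by simp
  moreover have "mk2 (of_real x) (of_real y) (of_real y) (of_real z) = U ** diagc d ** adjoint U"
  proof -
    have x: "complex_of_real x = of_real c * of_real l1 * of_real c + of_real s * of_real l2 * of_real s"
    proof - have "x = c * l1 * c + s * l2 * s" using h(3) by (simp add: power2_eq_square mult_ac) thus ?thesis by simp qed
    have y: "complex_of_real y = of_real c * of_real l1 * of_real s - of_real s * of_real l2 * of_real c"
    proof - have "y = c * l1 * s - s * l2 * c" using h(4) by (simp add: algebra_simps) thus ?thesis by simp qed
    have z: "complex_of_real z = of_real s * of_real l1 * of_real s + of_real c * of_real l2 * of_real c"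
    proof - have "z = s * l1 * s + c * l2 * c" using h(5) by (simp add: power2_eq_square mult_ac) thus ?thesis by simp qed
    show ?thesis unfolding U_def d_def diagc_mk2 x y z by (simp add: algebra_simps)
  qed
  ultimately show ?thesis by blast
qed

lemma real_pd_eigs:
  fixes x y z :: real
  assumes x: "0 < x" and dt: "0 < x * z - y\<^sup>2"
  shows "\<exists>U d. unitary U \<and> d 1 \<le> d 0 \<and> (\<forall>i. 0 < d i) \<and>
     mk2 (of_real x) (of_real y) (of_real y) (of_real z) = U ** diagc d ** adjoint U \<and>
     x \<le> d 0 \<and> d 0 = (x + z + sqrt ((x - z)\<^sup>2 + 4 * y\<^sup>2)) / 2"
proof -
  obtain U d where U: "unitary U" and s: "d 1 \<le> d 0" and X: "mk2 (of_real x) (of_real y) (of_real y) (of_real z) = U ** diagc d ** adjoint U"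
    using spec_real[of x y z] by blast
  have "complex_of_real (x + z) = complex_of_real (d 0 + d 1)"
    using decomp_tr_dt(1)[OF U X] by (simp add: tr2_def)
  hence t: "x + z = d 0 + d 1" by (simp only: of_real_eq_iff)
  have "complex_of_real (x * z - y\<^sup>2) = complex_of_real (d 0 * d 1)"
    using decomp_tr_dt(2)[OF U X] by (simp add: dt2_def power2_eq_square)
  hence dd: "x * z - y\<^sup>2 = d 0 * d 1" by (simp only: of_real_eq_iff)
  have "(x - d 0) * (x - d 1) = x * x - (d 0 + d 1) * x + d 0 * d 1" by (simp add: algebra_simps)
  also have "\<dots> = - y\<^sup>2" unfolding t[symmetric] dd[symmetric] by (simp add: algebra_simps)
  finally have pr: "(x - d 0) * (x - d 1) \<le> 0" by simp
  have xd: "x \<le> d 0"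
  proof (rule ccontr)
    assume "\<not> x \<le> d 0"
    hence "0 < x - d 0" "0 < x - d 1" using s by auto
    hence "0 < (x - d 0) * (x - d 1)" by simp
    thus False using pr by simp
  qed
  have d0: "0 < d 0" using xd x by simp
  have d1: "0 < d 1" using dd dt d0 by (metis zero_less_mult_pos)
  have pos: "\<forall>i. 0 < d i" using d0 d1 two_cases by metis
  have "(d 0 - d 1)\<^sup>2 = (d 0 + d 1)\<^sup>2 - 4 * (d 0 * d 1)" by (simp add: power2_eq_square algebra_simps)
  also have "\<dots> = (x - z)\<^sup>2 + 4 * y\<^sup>2" unfolding t[symmetric] dd[symmetric] by (simp add: power2_eq_square algebra_simps)
  finally have "sqrt ((x - z)\<^sup>2 + 4 * y\<^sup>2) = d 0 - d 1" using s by (metis real_sqrt_abs abs_of_nonneg diff_ge_0_iff_ge)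
  hence "d 0 = (x + z + sqrt ((x - z)\<^sup>2 + 4 * y\<^sup>2)) / 2" using t by simp
  thus ?thesis using U s pos X xd by blast
qed

lemma eigs_rpow:
  fixes X :: "complex^2^2"
  assumes U: "unitary U" and s: "d 1 \<le> d 0" and pos: "\<forall>i. 0 < d i" and X: "X = U ** diagc d ** adjoint U"
    and t: "0 < t"
  shows "eigs (mat_rpow X t) 0 = d 0 powr t"
proof -
  have "mat_rpow X t = U ** diagc (\<lambda>i. d i powr t) ** adjoint U" by (rule rpow_unique[OF U pos X])
  moreover have "d 1 powr t \<le> d 0 powr t" using s pos t by (simp add: powr_mono2 less_imp_le)
  ultimately have "eigs (mat_rpow X t) = (\<lambda>i. d i powr t)" using eigs_char[OF U] by simp
  thus ?thesis by simp
qed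

definition rot :: "real \<Rightarrow> real \<Rightarrow> complex^2^2" where
  "rot c s = mk2 (of_real c) (- of_real s) (of_real s) (of_real c)"

lemma unitary_rot: assumes "c\<^sup>2 + s\<^sup>2 = 1" shows "unitary (rot c s)"
proof -
  have "c * c + s * s = 1" using assms by (simp add: power2_eq_square)
  hence "complex_of_real (c * c + s * s) = 1" by simp
  hence hc: "complex_of_real c * complex_of_real c + complex_of_real s * complex_of_real s = 1" by simp
  show ?thesis unfolding rot_def unitary_mk2 using hc by (simp add: algebra_simps)
qed

lemma unitary_one: "unitary (mat 1 :: complex^2^2)"
  unfolding unitary_def by (simp add: mat1_mk2)

lemma rpowA:
  assumes "0 < \<epsilon>"
  shows "mat_rpow (diagc (\<lambda>i::2. if i = 0 then 1 else \<epsilon>)) t = mk2 1 0 0 (of_real (\<epsilon> powr t))"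
proof -
  have pos: "\<forall>i::2. 0 < (if i = 0 then 1 else \<epsilon>)" using assms by simp
  have "diagc (\<lambda>i::2. if i = 0 then 1 else \<epsilon>) = mat 1 ** diagc (\<lambda>i::2. if i = 0 then 1 else \<epsilon>) ** adjoint (mat 1)"
    by (simp add: mat1_mk2 diagc_mk2)
  from rpow_unique[OF unitary_one pos this, of t] show ?thesis
    by (simp add: mat1_mk2 diagc_mk2)
qed

lemma rpowB:
  assumes "0 < \<epsilon>" and cs: "c\<^sup>2 + s\<^sup>2 = 1"
  shows "mat_rpow (rot c s ** diagc (\<lambda>i::2. if i = 0 then 1 else \<epsilon>) ** adjoint (rot c s)) t =
    mk2 (of_real (c * c + s * s * \<epsilon> powr t)) (of_real (c * s * (1 - \<epsilon> powr t)))
        (of_real (c * s * (1 - \<epsilon> powr t))) (of_real (s * s + c * c * \<epsilon> powr t))"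
proof -
  have pos: "\<forall>i::2. 0 < (if i = 0 then 1 else \<epsilon>)" using assms by simp
  from rpow_unique[OF unitary_rot[OF cs] pos refl, of t] show ?thesis
    by (simp add: rot_def diagc_mk2 algebra_simps)
qed

lemma stage1:
  fixes \<alpha> p q c s e :: real
  assumes a0: "0 < \<alpha>" and a1: "\<alpha> < 1" and p: "0 < p" and q: "0 < q"
    and hyp: "\<forall>A B :: complex^2^2. pos_def A \<and> pos_def B \<longrightarrow>
           le_lambda (R_mean \<alpha> p A B) (A_mean \<alpha> q A B)"
    and c: "0 < c" and s: "0 < s" and cs: "c\<^sup>2 + s\<^sup>2 = 1" and e: "0 < e"
  shows "(c * c) powr (1 / p) \<le>
    (((1 - \<alpha>) + \<alpha> * (c * c + s * s * e) + ((1 - \<alpha>) * e + \<alpha> * (s * s + c * c * e))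
      + sqrt (((1 - \<alpha>) + \<alpha> * (c * c + s * s * e) - ((1 - \<alpha>) * e + \<alpha> * (s * s + c * c * e)))\<^sup>2
              + 4 * (\<alpha> * (c * s * (1 - e)))\<^sup>2)) / 2) powr (1 / q)"
proof -
  define \<epsilon> where "\<epsilon> = e powr (1 / q)"
  have \<epsilon>0: "0 < \<epsilon>" unfolding \<epsilon>_def using e by simp
  have \<epsilon>q: "\<epsilon> powr q = e" unfolding \<epsilon>_def using e q by (simp add: powr_powr)
  define dA where "dA = (\<lambda>i::2. if i = 0 then 1 else \<epsilon>)"
  have dApos: "\<forall>i. 0 < dA i" unfolding dA_def using \<epsilon>0 by simp
  define A where "A = diagc dA"
  define B where "B = rot c s ** diagc dA ** adjoint (rot c s)"
  have "A = mat 1 ** diagc dA ** adjoint (mat 1)" unfolding A_def by (simp add: mat1_mk2 diagc_mk2)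
  hence pdA: "pos_def A" using pos_def_decomp[OF unitary_one dApos] by simp
  have pdB: "pos_def B" unfolding B_def by (rule pos_def_decomp[OF unitary_rot[OF cs] dApos])
  have "le_lambda (R_mean \<alpha> p A B) (A_mean \<alpha> q A B)" using hyp pdA pdB by blast
  hence main: "eigs (R_mean \<alpha> p A B) 0 \<le> eigs (A_mean \<alpha> q A B) 0" unfolding le_lambda_def by blast
  have rA: "mat_rpow A t = mk2 1 0 0 (of_real (\<epsilon> powr t))" for t
    unfolding A_def dA_def by (rule rpowA[OF \<epsilon>0])
  have rB: "mat_rpow B t = mk2 (of_real (c * c + s * s * \<epsilon> powr t)) (of_real (c * s * (1 - \<epsilon> powr t)))
        (of_real (c * s * (1 - \<epsilon> powr t))) (of_real (s * s + c * c * \<epsilon> powr t))" for t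
    unfolding B_def dA_def by (rule rpowB[OF \<epsilon>0 cs])
  define u where "u = \<epsilon> powr ((1 - \<alpha>) / 2 * p)"
  define v where "v = \<epsilon> powr (\<alpha> * p)"
  have u0: "0 < u" and v0: "0 < v" unfolding u_def v_def using \<epsilon>0 by simp_all
  define x0 where "x0 = c * c + s * s * v"
  define y0 where "y0 = u * (c * s * (1 - v))"
  define z0 where "z0 = u * u * (s * s + c * c * v)"
  have X: "mat_rpow A ((1 - \<alpha>) / 2 * p) ** mat_rpow B (\<alpha> * p) ** mat_rpow A ((1 - \<alpha>) / 2 * p)
      = mk2 (of_real x0) (of_real y0) (of_real y0) (of_real z0)"
    unfolding rA rB u_def[symmetric] v_def[symmetric] x0_def y0_def z0_def by (simp add: algebra_simps)
  have x0: "0 < x0" unfolding x0_def using c v0 by (simp add: add_pos_nonneg)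
  have "x0 * z0 - y0\<^sup>2 = u * u * v * (c * c + s * s)\<^sup>2" unfolding x0_def y0_def z0_def
    by (simp add: power2_eq_square) algebra
  also have "\<dots> = u * u * v" using cs by (simp add: power2_eq_square)
  finally have dX: "0 < x0 * z0 - y0\<^sup>2" using u0 v0 by simp
  obtain U d where U: "unitary U" and sd: "d 1 \<le> d 0" and pd: "\<forall>i. 0 < d i"
    and XU: "mk2 (of_real x0) (of_real y0) (of_real y0) (of_real z0) = U ** diagc d ** adjoint U"
    and xd: "x0 \<le> d 0"
    using real_pd_eigs[OF x0 dX] by blast
  have eR: "eigs (R_mean \<alpha> p A B) 0 = d 0 powr (1 / p)"
    unfolding R_mean_def X using eigs_rpow[OF U sd pd XU] p by simp
  have "c * c \<le> x0" unfolding x0_def using v0 by simp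
  hence "c * c \<le> d 0" using xd by simp
  hence lhs: "(c * c) powr (1 / p) \<le> eigs (R_mean \<alpha> p A B) 0" unfolding eR using p
    by (simp add: powr_mono2)
  define Y00 where "Y00 = (1 - \<alpha>) + \<alpha> * (c * c + s * s * e)"
  define Y01 where "Y01 = \<alpha> * (c * s * (1 - e))"
  define Y11 where "Y11 = (1 - \<alpha>) * e + \<alpha> * (s * s + c * c * e)"
  have Y: "(1 - \<alpha>) *\<^sub>R mat_rpow A q + \<alpha> *\<^sub>R mat_rpow B q = mk2 (of_real Y00) (of_real Y01) (of_real Y01) (of_real Y11)"
    unfolding rA rB \<epsilon>q Y00_def Y01_def Y11_def by (simp add: algebra_simps)
  have Y00: "0 < Y00" unfolding Y00_def using a0 a1 e by (simp add: add_pos_nonneg)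
  have "Y00 * Y11 - Y01\<^sup>2 = (1 - \<alpha>) * (1 - \<alpha>) * e + \<alpha> * (1 - \<alpha>) * ((s * s + c * c * e) + e * (c * c + s * s * e))
      + \<alpha> * \<alpha> * e * (c * c + s * s)\<^sup>2"
    unfolding Y00_def Y01_def Y11_def by (simp add: power2_eq_square) algebra
  also have "\<dots> > 0" using a0 a1 e by (intro add_pos_nonneg) simp_all
  finally have dY: "0 < Y00 * Y11 - Y01\<^sup>2" .
  obtain V d' where V: "unitary V" and sd': "d' 1 \<le> d' 0" and pd': "\<forall>i. 0 < d' i"
    and YV: "mk2 (of_real Y00) (of_real Y01) (of_real Y01) (of_real Y11) = V ** diagc d' ** adjoint V"
    and d'0: "d' 0 = (Y00 + Y11 + sqrt ((Y00 - Y11)\<^sup>2 + 4 * Y01\<^sup>2)) / 2"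
    using real_pd_eigs[OF Y00 dY] by blast
  have eA: "eigs (A_mean \<alpha> q A B) 0 = d' 0 powr (1 / q)"
    unfolding A_mean_def Y using eigs_rpow[OF V sd' pd' YV] q by simp
  show ?thesis using lhs main eA d'0 unfolding Y00_def Y01_def Y11_def by simp
qed

lemma stage2:
  fixes \<alpha> p q :: real
  assumes a0: "0 < \<alpha>" and a1: "\<alpha> < 1" and p: "0 < p" and q: "0 < q"
    and H: "\<And>\<sigma>. 0 < \<sigma> \<Longrightarrow> \<sigma> < 1 \<Longrightarrow>
       (1 - \<sigma>) powr (1 / p) \<le> ((1 + sqrt (1 - 4 * (\<alpha> * (1 - \<alpha>)) * \<sigma>)) / 2) powr (1 / q)"
  shows "\<alpha> * (1 - \<alpha>) * p \<le> q"
proof (rule ccontr)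
  define k where "k = \<alpha> * (1 - \<alpha>)"
  have k0: "0 < k" unfolding k_def using a0 a1 by simp
  have k4: "k \<le> 1 / 4"
  proof -
    have "0 \<le> (\<alpha> - 1 / 2)\<^sup>2" by simp
    thus ?thesis unfolding k_def by (simp add: power2_eq_square algebra_simps)
  qed
  assume "\<not> \<alpha> * (1 - \<alpha>) * p \<le> q"
  hence kp: "q < k * p" unfolding k_def by simp
  define \<sigma> where "\<sigma> = min (1 / 4) ((k * p - q) / (4 * q))"
  have \<sigma>0: "0 < \<sigma>" unfolding \<sigma>_def using kp q by simp
  have \<sigma>4: "\<sigma> \<le> 1 / 4" unfolding \<sigma>_def by simp
  have \<sigma>q: "\<sigma> * (4 * q) \<le> k * p - q" unfolding \<sigma>_def using q
    by (metis min.cobounded2 pos_le_divide_eq zero_less_mult_iff zero_less_numeral)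
  have h: "(1 - \<sigma>) powr (1 / p) \<le> ((1 + sqrt (1 - 4 * k * \<sigma>)) / 2) powr (1 / q)"
    using H[OF \<sigma>0] \<sigma>4 unfolding k_def by simp
  have ks: "k * \<sigma> \<le> 1 / 16" using k4 \<sigma>4 k0 \<sigma>0 mult_mono[OF k4 \<sigma>4] by simp
  have "sqrt (1 - 4 * k * \<sigma>) \<le> sqrt ((1 - 2 * k * \<sigma>)\<^sup>2)"
    by (rule real_sqrt_le_mono) (simp add: power2_eq_square algebra_simps k0 \<sigma>0 less_imp_le)
  also have "\<dots> = 1 - 2 * k * \<sigma>" using ks by simp
  finally have "(1 + sqrt (1 - 4 * k * \<sigma>)) / 2 \<le> 1 - k * \<sigma>" by simp
  moreover have "0 \<le> (1 + sqrt (1 - 4 * k * \<sigma>)) / 2" using ks by simp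
  ultimately have "((1 + sqrt (1 - 4 * k * \<sigma>)) / 2) powr (1 / q) \<le> (1 - k * \<sigma>) powr (1 / q)"
    using q by (simp add: powr_mono2)
  with h have h2: "(1 - \<sigma>) powr (1 / p) \<le> (1 - k * \<sigma>) powr (1 / q)" by simp
  have pos1: "0 < 1 - \<sigma>" and pos2: "0 < 1 - k * \<sigma>" using \<sigma>4 ks by simp_all
  have "ln ((1 - \<sigma>) powr (1 / p)) \<le> ln ((1 - k * \<sigma>) powr (1 / q))"
  proof -
    have g1: "0 < (1 - \<sigma>) powr (1 / p)" and g2: "0 < (1 - k * \<sigma>) powr (1 / q)" using pos1 pos2 by simp_all
    show ?thesis using ln_le_cancel_iff[OF g1 g2] h2 by blast
  qed
  moreover have "ln ((1 - \<sigma>) powr (1 / p)) = ln (1 - \<sigma>) / p" using pos1 by (simp add: ln_powr)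
  moreover have "ln ((1 - k * \<sigma>) powr (1 / q)) = ln (1 - k * \<sigma>) / q" using pos2 by (simp add: ln_powr)
  ultimately have l: "ln (1 - \<sigma>) / p \<le> ln (1 - k * \<sigma>) / q" by simp
  have l1: "- \<sigma> - 2 * \<sigma>\<^sup>2 \<le> ln (1 - \<sigma>)" using ln_one_minus_pos_lower_bound[of \<sigma>] \<sigma>0 \<sigma>4 by simp
  have l2: "ln (1 - k * \<sigma>) \<le> - (k * \<sigma>)" using ln_le_minus_one[OF pos2] by simp
  have "(- \<sigma> - 2 * \<sigma>\<^sup>2) / p \<le> - (k * \<sigma>) / q"
    using l l1 l2 p q by (meson divide_right_mono less_imp_le order_trans)
  hence "(- \<sigma> - 2 * \<sigma>\<^sup>2) * q \<le> - (k * \<sigma>) * p" using p q by (simp add: field_simps)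
  hence "\<sigma> * (k * p) \<le> \<sigma> * (q * (1 + 2 * \<sigma>))" by (simp add: power2_eq_square algebra_simps)
  hence "k * p \<le> q * (1 + 2 * \<sigma>)" using \<sigma>0 by simp
  moreover have "q * (1 + 2 * \<sigma>) < k * p"
  proof -
    have "0 < \<sigma> * (q * 2)" using q \<sigma>0 by simp
    thus ?thesis using \<sigma>q by (simp add: algebra_simps)
  qed
  ultimately show False by simp
qed

theorem theorem4p10:
  fixes \<alpha> p q :: real
  assumes "0 < \<alpha>" and "\<alpha> < 1" and "0 < p" and "0 < q"
    and "\<forall>A B :: complex^2^2. pos_def A \<and> pos_def B \<longrightarrow>
           le_lambda (R_mean \<alpha> p A B) (A_mean \<alpha> q A B)"
  shows "\<alpha> * (1 - \<alpha>) * p \<le> q"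
proof -
  have H: "(1 - \<sigma>) powr (1 / p) \<le> ((1 + sqrt (1 - 4 * (\<alpha> * (1 - \<alpha>)) * \<sigma>)) / 2) powr (1 / q)"
    if \<sigma>0: "0 < \<sigma>" and \<sigma>1: "\<sigma> < 1" for \<sigma>
  proof -
    define c where "c = sqrt (1 - \<sigma>)"
    define s where "s = sqrt \<sigma>"
    have c0: "0 < c" unfolding c_def using \<sigma>1 by simp
    have s0: "0 < s" unfolding s_def using \<sigma>0 by simp
    have cc: "c * c = 1 - \<sigma>" unfolding c_def using \<sigma>1 by simp
    have ss: "s * s = \<sigma>" unfolding s_def using \<sigma>0 by simp
    have cs: "c\<^sup>2 + s\<^sup>2 = 1" using cc ss by (simp add: power2_eq_square)
    define E where "E = (\<lambda>e. ((1 - \<alpha>) + \<alpha> * (c * c + s * s * e) + ((1 - \<alpha>) * e + \<alpha> * (s * s + c * c * e))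
      + sqrt (((1 - \<alpha>) + \<alpha> * (c * c + s * s * e) - ((1 - \<alpha>) * e + \<alpha> * (s * s + c * c * e)))\<^sup>2
              + 4 * (\<alpha> * (c * s * (1 - e)))\<^sup>2)) / 2)"
    have le: "(c * c) powr (1 / p) \<le> E e powr (1 / q)" if "0 < e" for e
      unfolding E_def by (rule stage1[OF assms c0 s0 cs that])
    have limE: "(E \<longlongrightarrow> E 0) (at_right 0)" unfolding E_def
      by (intro tendsto_intros) simp
    have sq: "((1 - \<alpha>) + \<alpha> * (c * c) - \<alpha> * (s * s))\<^sup>2 + 4 * (\<alpha> * (c * s))\<^sup>2
        = 1 - 4 * (\<alpha> * (1 - \<alpha>)) * \<sigma>"
    proof -
      have "((1 - \<alpha>) + \<alpha> * (c * c) - \<alpha> * (s * s))\<^sup>2 + 4 * (\<alpha> * (c * s))\<^sup>2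
         = ((1 - \<alpha>) + \<alpha> * (c * c) - \<alpha> * (s * s))\<^sup>2 + 4 * \<alpha> * \<alpha> * (c * c) * (s * s)"
        by (simp add: power2_eq_square mult_ac)
      also have "\<dots> = 1 - 4 * (\<alpha> * (1 - \<alpha>)) * \<sigma>" unfolding cc ss by (simp add: power2_eq_square algebra_simps)
      finally show ?thesis .
    qed
    have E0: "E 0 = (1 + sqrt (1 - 4 * (\<alpha> * (1 - \<alpha>)) * \<sigma>)) / 2"
    proof -
      have "(1 - \<alpha>) + \<alpha> * (c * c) + \<alpha> * (s * s) = 1" unfolding cc ss by (simp add: algebra_simps)
      thus ?thesis unfolding E_def using sq by simp
    qed
    have "0 \<le> 1 - 4 * (\<alpha> * (1 - \<alpha>)) * \<sigma>" unfolding sq[symmetric] by simp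
    hence "0 < E 0" unfolding E0 by (simp add: add_pos_nonneg)
    hence limF: "((\<lambda>e. E e powr (1 / q)) \<longlongrightarrow> E 0 powr (1 / q)) (at_right 0)"
      by (intro tendsto_powr limE tendsto_const) simp
    have ev: "\<forall>\<^sub>F e in at_right 0. (c * c) powr (1 / p) \<le> E e powr (1 / q)"
      using eventually_at_right_less[of "0::real"] by (rule eventually_mono) (rule le)
    have "(c * c) powr (1 / p) \<le> E 0 powr (1 / q)"
      by (rule tendsto_lowerbound[OF limF ev]) simp
    thus ?thesis unfolding E0 cc .
  qed
  show ?thesis by (rule stage2[OF assms(1-4) H])
qed

end
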